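(* Let $C_\infty=(\mathbb{N},+)$. Let $\mathcal{R}$ be the commutative DGA-algebra over $\mathbb{H}C_\infty$ with $\mathcal{R}_0$ free on $\{v_0\}$ ($\pi v_0=0$), $\mathcal{R}_1$ free on $\{w_0\}$ ($\pi w_0=1$), $\mathcal{R}_n=0$ for $n\ge2$, zero differential, augmentation the canonical isomorphism $\mathcal{R}_0\cong\mathbb{Z}$, and multiplication $v_0\circ v_0=v_0$, $v_0\circ w_0=w_0$, $w_0\circ w_0=0$. Then there are morphisms of DGA-algebras over $\mathbb{H}C_\infty$, $f:\mathbf{B}(\mathcal{Z}C_\infty)\to\mathcal{R}$ and $g:\mathcal{R}\to\mathbf{B}(\mathcal{Z}C_\infty)$, determined by $f[\,]=v_0$, $f[x]=x\,\big((x-1)_*w_0\big)$ (for $x\ge1$), $g v_0=[\,]$, $g w_0=[1]$, and they form a contraction: $fg=\mathrm{id}_{\mathcal{R}}$ and there is a chain homotopy $\Phi$ from $gf$ to $\mathrm{id}_{\mathbf{B}(\mathcal{Z}C_\infty)}$ (a morphism of $\mathbb{H}C_\infty$-modules of degree $+1$ with $\partial\Phi+\Phi\partial=gf-\mathrm{id}$, up to the sign convention) satisfying $\Phi g=0$, $f\Phi=0$, $\Phi\Phi=0$.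
   Context: For a commutative monoid $M$ (here $C_\infty$, written additively with identity $0$; read $xy$ as $x+y$), $\mathbb{H}M$ has objects the elements of $M$ and morphisms $(x,y):x\to xy$; an $\mathbb{H}M$-module is a functor $\mathbb{H}M\to\mathbf{Ab}$, i.e. groups $\mathcal{A}(x)$ with $y_*:\mathcal{A}(x)\to\mathcal{A}(xy)$, $y_*z_*=(yz)_*$, $e_*=\mathrm{id}$. A free $\mathbb{H}M$-module on a set $S$ with $\pi:S\to M$ has $(\cdot)(x)$ free abelian on $\{(u,s):u\,\pi(s)=x\}$, $y_*(u,s)=(uy,s)$, $s=(e,s)$. Chain complexes of $\mathbb{H}M$-modules form a symmetric monoidal category (tensor product $(\mathcal{A}\otimes\mathcal{B})(x)=\bigoplus_{zt=x}\mathcal{A}(z)\otimes\mathcal{B}(t)/(u_*a\otimes b=a\otimes u_*b)$, Koszul signs, unit the constant module $\mathbb{Z}$); a commutative DGA-algebra over $\mathbb{H}M$ is a commutative monoid there with an augmentation morphism of monoids to $\mathbb{Z}$. $\mathbf{B}(\mathcal{Z}M)$ is the (commutative DGA-) bar construction of $\mathcal{Z}M$: in degree $0$ it is free on $[\,]$ (with $\pi[\,]=e$), and for $n\ge1$ it is the free $\mathbb{H}M$-module on the cells $[x_1|\cdots|x_n]$, $x_i\in M$, $\pi[x_1|\cdots|x_n]=x_1\cdots x_n$, with $[x_1|\cdots|x_n]=0$ if some $x_i=e$; differential $\partial[x_1|\cdots|x_n]=x_{1*}[x_2|\cdots|x_n]+\sum_{i=1}^{n-1}(-1)^i[x_1|\cdots|x_ix_{i+1}|\cdots|x_n]+(-1)^nx_{n*}[x_1|\cdots|x_{n-1}]$;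 multiplication the shuffle product $[x_1|\cdots|x_n]\circ[x_{n+1}|\cdots|x_{n+m}]=\sum_\sigma\mathrm{sgn}(\sigma)[x_{\sigma^{-1}(1)}|\cdots|x_{\sigma^{-1}(n+m)}]$ over $(n,m)$-shuffles; unit $[\,]$; augmentation $\mathbf{B}_0\cong\mathbb{Z}$. Morphisms of DGA-algebras preserve differential, multiplication, unit and augmentation; morphisms from a free module are determined by values on generators. *)

theory Defs
  imports "HOL-Library.Poly_Mapping" "HOL-Combinatorics.Permutations"
begin

text \<open>Modules over HC_infinity (C_infinity = (nat,+)) that are free on a set of
generators S with grading pi are encoded as follows: the group A(x) is the set of
integer linear combinations (finitely supported functions to int, 'a frag) of generators s with pi s at most x,
the basis element (u,s) of A(x) (u + pi s = x) being represented by frag_of s.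
With this encoding y_* from A(x) to A(x+y), sending (u,s) to (u+y,s), is the inclusion
(identity on representatives).  Chain degree is given by a degree function on
generators; an element of A(x) may have components in several degrees.\<close>

record 'a hdga =
  carr :: "nat \<Rightarrow> ('a \<Rightarrow>\<^sub>0 int) set"
  gdeg :: "'a \<Rightarrow> nat"
  diff :: "('a \<Rightarrow>\<^sub>0 int) \<Rightarrow> ('a \<Rightarrow>\<^sub>0 int)"
  mult :: "('a \<Rightarrow>\<^sub>0 int) \<Rightarrow> ('a \<Rightarrow>\<^sub>0 int) \<Rightarrow> ('a \<Rightarrow>\<^sub>0 int)"  \<comment> \<open>A(z) x A(t) to A(z+t)\<close>
  unt  :: "'a \<Rightarrow>\<^sub>0 int"
  aug  :: "('a \<Rightarrow>\<^sub>0 int) \<Rightarrow> int"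

definition homog :: "('a \<Rightarrow> nat) \<Rightarrow> nat \<Rightarrow> ('a \<Rightarrow>\<^sub>0 int) \<Rightarrow> bool" where
  "homog deg n c \<longleftrightarrow> (\<forall>k \<in> Poly_Mapping.keys c. deg k = n)"

text \<open>Morphism of HC_infinity-modules (of chain complexes' underlying graded modules)
of degree d: additive on each A(x), compatible with the y_* (which are inclusions in
our encoding), raising chain degree by d.\<close>
definition mod_mor :: "'a hdga \<Rightarrow> 'b hdga \<Rightarrow> nat \<Rightarrow> (nat \<Rightarrow> ('a \<Rightarrow>\<^sub>0 int) \<Rightarrow> ('b \<Rightarrow>\<^sub>0 int)) \<Rightarrow> bool" where
  "mod_mor A B d \<phi> \<longleftrightarrow>
     (\<forall>x. \<forall>a \<in> carr A x. \<phi> x a \<in> carr B x) \<and>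
     (\<forall>x. \<forall>a \<in> carr A x. \<forall>b \<in> carr A x. \<phi> x (a + b) = \<phi> x a + \<phi> x b) \<and>
     (\<forall>x y. \<forall>a \<in> carr A x. \<phi> (x + y) a = \<phi> x a) \<and>
     (\<forall>x n. \<forall>a \<in> carr A x. homog (gdeg A) n a \<longrightarrow> homog (gdeg B) (n + d) (\<phi> x a))"

definition dga_mor :: "'a hdga \<Rightarrow> 'b hdga \<Rightarrow> (nat \<Rightarrow> ('a \<Rightarrow>\<^sub>0 int) \<Rightarrow> ('b \<Rightarrow>\<^sub>0 int)) \<Rightarrow> bool" where
  "dga_mor A B \<phi> \<longleftrightarrow>
     mod_mor A B 0 \<phi> \<and>
     (\<forall>x. \<forall>a \<in> carr A x. \<phi> x (diff A a) = diff B (\<phi> x a)) \<and>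
     (\<forall>z t. \<forall>a \<in> carr A z. \<forall>b \<in> carr A t. \<phi> (z + t) (mult A a b) = mult B (\<phi> z a) (\<phi> t b)) \<and>
     \<phi> 0 (unt A) = unt B \<and>
     (\<forall>x. \<forall>a \<in> carr A x. aug B (\<phi> x a) = aug A a)"

text \<open>Cells [x_1|...|x_n] are lists of naturals; pi of a cell is its sum.
A cell with some entry 0 (= e) is zero.\<close>

definition bcell :: "nat list \<Rightarrow> nat list \<Rightarrow>\<^sub>0 int" where
  "bcell s = (if 0 \<in> set s then 0 else frag_of s)"

definition bcells :: "nat \<Rightarrow> nat list set" where
  "bcells x = {s. (\<forall>i \<in> set s. 0 < i) \<and> sum_list s \<le> x}"

text \<open>merge i s = [x_1|...|x_i x_{i+1}|...|x_n] (1-based i).\<close>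
definition bmerge :: "nat \<Rightarrow> nat list \<Rightarrow> nat list" where
  "bmerge i s = take (i - 1) s @ [s ! (i - 1) + s ! i] @ drop (i + 1) s"

definition bd_cell :: "nat list \<Rightarrow> nat list \<Rightarrow>\<^sub>0 int" where
  "bd_cell s = (if s = [] then 0 else
      bcell (tl s)
      + (\<Sum>i \<in> {1..<length s}. frag_cmul ((-1) ^ i) (bcell (bmerge i s)))
      + frag_cmul ((-1) ^ length s) (bcell (butlast s)))"

definition shuffles :: "nat \<Rightarrow> nat \<Rightarrow> (nat \<Rightarrow> nat) set" where
  "shuffles n m = {\<sigma>. \<sigma> permutes {..<n + m} \<and>
      (\<forall>i j. i < j \<and> j < n \<longrightarrow> \<sigma> i < \<sigma> j) \<and>
      (\<forall>i j. n \<le> i \<and> i < j \<and> j < n + m \<longrightarrow> \<sigma> i < \<sigma> j)}"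

definition shuffle_cells :: "nat list \<Rightarrow> nat list \<Rightarrow> nat list \<Rightarrow>\<^sub>0 int" where
  "shuffle_cells s t = (\<Sum>\<sigma> \<in> shuffles (length s) (length t).
      frag_cmul (sign \<sigma>) (bcell (map (\<lambda>j. (s @ t) ! inv \<sigma> j) [0..<length s + length t])))"

definition Bbar :: "nat list hdga" where
  "Bbar = \<lparr> carr = (\<lambda>x. {c. Poly_Mapping.keys c \<subseteq> bcells x}),
            gdeg = length,
            diff = frag_extend bd_cell,
            mult = (\<lambda>a b. frag_extend (\<lambda>s. frag_extend (\<lambda>t. shuffle_cells s t) b) a),
            unt = frag_of [],
            aug = (\<lambda>c. Poly_Mapping.lookup c []) \<rparr>"

datatype rgen = V0 | W0

definition rcells :: "nat \<Rightarrow> rgen set" where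
  "rcells x = (if 1 \<le> x then {V0, W0} else {V0})"

fun rdeg :: "rgen \<Rightarrow> nat" where
  "rdeg V0 = 0" | "rdeg W0 = 1"

fun rmul_gen :: "rgen \<Rightarrow> rgen \<Rightarrow> rgen \<Rightarrow>\<^sub>0 int" where
  "rmul_gen V0 V0 = frag_of V0"
| "rmul_gen V0 W0 = frag_of W0"
| "rmul_gen W0 V0 = frag_of W0"
| "rmul_gen W0 W0 = 0"

definition Rdga :: "rgen hdga" where
  "Rdga = \<lparr> carr = (\<lambda>x. {c. Poly_Mapping.keys c \<subseteq> rcells x}),
            gdeg = rdeg,
            diff = (\<lambda>_. 0),
            mult = (\<lambda>a b. frag_extend (\<lambda>p. frag_extend (\<lambda>q. rmul_gen p q) b) a),
            unt = frag_of V0,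
            aug = (\<lambda>c. Poly_Mapping.lookup c V0) \<rparr>"

end

theory Submission
  imports Defs
begin


definition bmul :: "('a \<Rightarrow> 'b \<Rightarrow> 'c \<Rightarrow>\<^sub>0 int) \<Rightarrow> ('a \<Rightarrow>\<^sub>0 int) \<Rightarrow> ('b \<Rightarrow>\<^sub>0 int) \<Rightarrow> 'c \<Rightarrow>\<^sub>0 int" where
  "bmul h a b = frag_extend (\<lambda>s. frag_extend (h s) b) a"

lemma fe_pw_diff: "frag_extend (\<lambda>s. f s - g s) c = frag_extend f c - frag_extend g c"
proof -
  have "Poly_Mapping.keys c \<subseteq> UNIV" by simp
  then show ?thesis
    by (induction c rule: frag_induction) (auto simp: frag_extend_diff algebra_simps)
qed

lemma fe_zero_fun: "frag_extend (\<lambda>s. 0) c = 0"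
  by (rule frag_extend_eq_0) simp

lemma fe_comp: "frag_extend L (frag_extend h c) = frag_extend (\<lambda>s. frag_extend L (h s)) c"
proof -
  have "Poly_Mapping.keys c \<subseteq> UNIV" by simp
  then show ?thesis
    by (induction c rule: frag_induction) (auto simp: frag_extend_diff)
qed

lemma bmul_hom:
  assumes "Poly_Mapping.keys a \<subseteq> S" "Poly_Mapping.keys b \<subseteq> T"
    and H: "\<And>s t. s \<in> S \<Longrightarrow> t \<in> T \<Longrightarrow> frag_extend L (h s t) = bmul k (M s) (N t)"
  shows "frag_extend L (bmul h a b) = bmul k (frag_extend M a) (frag_extend N b)"
  using assms(1)
proof (induction a rule: frag_induction)
  case zero
  then show ?case by (simp add: bmul_def)
next
  case (one s)
  from assms(2) show ?case
  proof (induction b rule: frag_induction)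
    case zero
    then show ?case by (simp add: bmul_def fe_zero_fun)
  next
    case (one t)
    then show ?case using H[OF \<open>s \<in> S\<close> one] by (simp add: bmul_def)
  next
    case (diff b1 b2)
    then show ?case by (simp add: bmul_def frag_extend_diff fe_pw_diff)
  qed
next
  case (diff a1 a2)
  then show ?case by (simp add: bmul_def frag_extend_diff)
qed

lemma smono_ge:
  "\<forall>i j. i < j \<and> j < m \<longrightarrow> \<tau> i < \<tau> j \<Longrightarrow> (n::nat) < m \<Longrightarrow> n \<le> (\<tau> n::nat)"
proof (induction n)
  case 0 then show ?case by simp
next
  case (Suc i)
  have a: "\<tau> i < \<tau> (Suc i)" using Suc.prems by auto
  have b: "i \<le> \<tau> i" using Suc by auto
  from a b show ?case by linarith
qed

lemma perm_smono_id:
  assumes p: "\<sigma> permutes {..<m::nat}" and sm: "\<forall>i j. i < j \<and> j < m \<longrightarrow> \<sigma> i < \<sigma> j"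
  shows "\<sigma> = id"
proof
  fix i
  show "\<sigma> i = id i"
  proof (cases "i < m")
    case False
    then show ?thesis using permutes_not_in[OF p] by simp
  next
    case True
    have ip: "inv \<sigma> permutes {..<m}" using permutes_inv[OF p] .
    have iin: "\<And>j. j < m \<Longrightarrow> inv \<sigma> j < m"
      using permutes_in_image[OF ip] by simp
    have si: "\<And>j. \<sigma> (inv \<sigma> j) = j" using permutes_inverses(1)[OF p] by simp
    have mono: "\<sigma> a \<le> \<sigma> b" if "a \<le> b" "b < m" for a b
    proof (cases "a = b")
      case False
      then have "a < b" using that by simp
      then show ?thesis using sm that by (simp add: less_imp_le)
    qed simp
    have ism: "\<forall>i j. i < j \<and> j < m \<longrightarrow> inv \<sigma> i < inv \<sigma> j"
    proof (intro allI impI)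
      fix a b assume ab: "a < b \<and> b < m"
      show "inv \<sigma> a < inv \<sigma> b"
      proof (rule ccontr)
        assume "\<not> inv \<sigma> a < inv \<sigma> b"
        then have "inv \<sigma> b \<le> inv \<sigma> a" by simp
        from mono[OF this iin[of a]] ab have "\<sigma> (inv \<sigma> b) \<le> \<sigma> (inv \<sigma> a)" by auto
        with si ab show False by simp
      qed
    qed
    have 1: "inv \<sigma> i \<le> i" using smono_ge[OF sm iin[OF True]] si by simp
    have 2: "i \<le> inv \<sigma> i" using smono_ge[OF ism True] .
    from 1 2 have "inv \<sigma> i = i" by simp
    then show ?thesis using si[of i] by simp
  qed
qed

lemma shuffles_0: "shuffles 0 m = {id}"
  unfolding shuffles_def
  using perm_smono_id[of _ m] by (auto simp: permutes_id)

lemma shuffles_0': "shuffles n 0 = {id}"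
  unfolding shuffles_def
  using perm_smono_id[of _ n] by (auto simp: permutes_id)

lemma perm2: "\<sigma> permutes {..<Suc (Suc 0)} \<Longrightarrow> \<sigma> = id \<or> \<sigma> = transpose 0 1"
proof -
  assume p: "\<sigma> permutes {..<Suc (Suc 0)}"
  have r: "\<And>j. j < Suc (Suc 0) \<Longrightarrow> \<sigma> j < Suc (Suc 0)" using permutes_in_image[OF p] by simp
  have o: "\<And>j. \<not> j < Suc (Suc 0) \<Longrightarrow> \<sigma> j = j" using permutes_not_in[OF p] by simp
  have inj: "inj \<sigma>" using permutes_inj[OF p] .
  have "\<sigma> 0 < Suc (Suc 0)" "\<sigma> 1 < Suc (Suc 0)" using r by auto
  moreover have "\<sigma> 0 \<noteq> \<sigma> 1" using inj by (simp add: inj_eq)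
  ultimately have "(\<sigma> 0 = 0 \<and> \<sigma> 1 = 1) \<or> (\<sigma> 0 = 1 \<and> \<sigma> 1 = 0)" by presburger
  then show ?thesis
  proof
    assume h: "\<sigma> 0 = 0 \<and> \<sigma> 1 = 1"
    have "\<sigma> = id"
    proof
      fix j have "j = 0 \<or> j = 1 \<or> \<not> j < Suc (Suc 0)" by linarith
      then show "\<sigma> j = id j" using h o[of j] by (elim disjE) simp_all
    qed
    then show ?thesis by (rule disjI1)
  next
    assume h: "\<sigma> 0 = 1 \<and> \<sigma> 1 = 0"
    have "\<sigma> = transpose 0 1"
    proof
      fix j have "j = 0 \<or> j = 1 \<or> \<not> j < Suc (Suc 0)" by linarith
      then show "\<sigma> j = transpose 0 1 j" using h o[of j] by (elim disjE) (simp_all add: transpose_def)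
    qed
    then show ?thesis by (rule disjI2)
  qed
qed

lemma shuffles_11: "shuffles (Suc 0) (Suc 0) = {id, transpose 0 1}"
proof -
  have "shuffles (Suc 0) (Suc 0) = {\<sigma>. \<sigma> permutes {..<Suc (Suc 0)}}" unfolding shuffles_def by auto
  also have "\<dots> = {id, transpose 0 1}"
  proof
    show "{\<sigma>. \<sigma> permutes {..<Suc (Suc 0)}} \<subseteq> {id, transpose 0 1}" using perm2 by blast
    show "{id, transpose 0 1} \<subseteq> {\<sigma>. \<sigma> permutes {..<Suc (Suc 0)}}"
      using permutes_id[of "{..<Suc (Suc 0)}"] permutes_swap_id[of 0 "{..<Suc (Suc 0)}" 1] by simp
  qed
  finally show ?thesis .
qed

lemma bcell_pos: "\<forall>i\<in>set s. 0 < i \<Longrightarrow> bcell s = frag_of s"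
  by (auto simp: bcell_def)

lemma shuffle_nil: "\<forall>i\<in>set t. 0 < i \<Longrightarrow> shuffle_cells [] t = frag_of t"
  by (simp add: shuffle_cells_def shuffles_0 bcell_pos map_nth)

lemma shuffle_nil': "\<forall>i\<in>set t. 0 < i \<Longrightarrow> shuffle_cells t [] = frag_of t"
  by (simp add: shuffle_cells_def shuffles_0' bcell_pos map_nth)

lemma shuffle_11: "shuffle_cells [1] [1] = 0"
proof -
  have "transpose (0::nat) 1 \<noteq> id" by (metis id_apply transpose_apply_first zero_neq_one)
  then show ?thesis
    by (simp add: shuffle_cells_def shuffles_11 sign_swap_id bcell_def)
qed



definition fgen :: "nat list \<Rightarrow> rgen \<Rightarrow>\<^sub>0 int" where
  "fgen s = (if s = [] then frag_of V0 else if length s = 1 then frag_cmul (int (hd s)) (frag_of W0) else 0)"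

fun ggen :: "rgen \<Rightarrow> nat list \<Rightarrow>\<^sub>0 int" where
  "ggen V0 = frag_of []" | "ggen W0 = frag_of [1]"

definition pgen :: "nat list \<Rightarrow> nat list \<Rightarrow>\<^sub>0 int" where
  "pgen s = (if s = [] then 0 else frag_cmul ((-1)^(length s - 1)) (\<Sum>i\<in>{1..<last s}. frag_of (butlast s @ [i,1])))"

abbreviation "FF \<equiv> frag_extend fgen"
abbreviation "GG \<equiv> frag_extend ggen"
abbreviation "PP \<equiv> frag_extend pgen"

lemma keys_bcell: "Poly_Mapping.keys (bcell s) \<subseteq> {s}"
  by (simp add: bcell_def keys_frag_of)

lemma length_bmerge: "1 \<le> i \<Longrightarrow> i < length s \<Longrightarrow> length (bmerge i s) = length s - 1"
  by (simp add: bmerge_def)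

lemma keys_bd: "Poly_Mapping.keys (bd_cell s) \<subseteq> {u. length u = length s - 1}"
proof (cases "s = []")
  case True then show ?thesis by (simp add: bd_cell_def)
next
  case False
  have a: "Poly_Mapping.keys (bcell (tl s)) \<subseteq> {u. length u = length s - 1}"
    using keys_bcell[of "tl s"] by auto
  have b: "Poly_Mapping.keys (frag_cmul ((-1) ^ length s) (bcell (butlast s))) \<subseteq> {u. length u = length s - 1}"
    using keys_bcell[of "butlast s"] keys_cmul by fastforce
  have c: "Poly_Mapping.keys (\<Sum>i \<in> {1..<length s}. frag_cmul ((-1) ^ i) (bcell (bmerge i s))) \<subseteq> {u. length u = length s - 1}"
  proof -
    have "Poly_Mapping.keys (\<Sum>i \<in> {1..<length s}. frag_cmul ((-1) ^ i) (bcell (bmerge i s)))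
      \<subseteq> (\<Union>i\<in>{1..<length s}. Poly_Mapping.keys (frag_cmul ((-1) ^ i) (bcell (bmerge i s))))"
      by (rule keys_sum)
    also have "\<dots> \<subseteq> {u. length u = length s - 1}"
    proof
      fix u assume "u \<in> (\<Union>i\<in>{1..<length s}. Poly_Mapping.keys (frag_cmul ((-1) ^ i) (bcell (bmerge i s))))"
      then obtain i where i: "i \<in> {1..<length s}" "u \<in> Poly_Mapping.keys (bcell (bmerge i s))" by auto
      then have "u = bmerge i s" using keys_bcell by blast
      then show "u \<in> {u. length u = length s - 1}" using i length_bmerge by auto
    qed
    finally show ?thesis .
  qed
  have k: "Poly_Mapping.keys (f+g+h) \<subseteq> Poly_Mapping.keys f \<union> Poly_Mapping.keys g \<union> Poly_Mapping.keys h" for f g h :: "nat list \<Rightarrow>\<^sub>0 int"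
    using keys_add[of "f+g" h] keys_add[of f g] by blast
  have "bd_cell s = bcell (tl s) + (\<Sum>i \<in> {1..<length s}. frag_cmul ((-1) ^ i) (bcell (bmerge i s))) + frag_cmul ((-1) ^ length s) (bcell (butlast s))"
    using False by (simp add: bd_cell_def)
  then show ?thesis using a b c k[of "bcell (tl s)" "(\<Sum>i \<in> {1..<length s}. frag_cmul ((-1) ^ i) (bcell (bmerge i s)))" "frag_cmul ((-1) ^ length s) (bcell (butlast s))"]
    by auto
qed

lemma fgen_long: "2 \<le> length s \<Longrightarrow> fgen s = 0"
  by (auto simp: fgen_def)

lemma list_cases3:
  obtains "s = []" | a where "s = [a]" | a b where "s = [a,b]" | "3 \<le> length s"
proof (cases s)
  case Nil then show ?thesis using that(1) by simp
next
  case (Cons a t)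
  note st = this
  show ?thesis
  proof (cases t)
    case Nil then show ?thesis using that(2) st by simp
  next
    case (Cons b u)
    note tu = this
    show ?thesis
    proof (cases u)
      case Nil then show ?thesis using that(3) st tu by simp
    next
      case (Cons c w) then show ?thesis using that(4) st tu by simp
    qed
  qed
qed

lemma FF_bcell_long: "2 \<le> length s \<Longrightarrow> FF (bcell s) = 0"
  by (simp add: bcell_def fgen_long)

lemma FF_long: "Poly_Mapping.keys c \<subseteq> {u. 2 \<le> length u} \<Longrightarrow> FF c = 0"
  by (rule frag_extend_eq_0) (auto simp: fgen_long)

lemma frag_cmul_diff2: "frag_cmul c (a - b) = frag_cmul c a - frag_cmul c b"
  by (metis add_diff_cancel frag_cmul_distrib2 diff_add_cancel)

lemma FF_bd: assumes "\<forall>i\<in>set s. 0 < i" shows "FF (bd_cell s) = 0"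
proof -
  show ?thesis
  proof (cases s rule: list_cases3)
    case 1 then show ?thesis by (simp add: bd_cell_def)
  next
    case (2 a) then show ?thesis by (simp add: bd_cell_def)
  next
    case (3 a b)
    have m: "bmerge (Suc 0) [a,b] = [a+b]" by (simp add: bmerge_def)
    have "FF (bd_cell s) = frag_cmul (int b) (frag_of W0) - frag_cmul (int (a+b)) (frag_of W0) + frag_cmul (int a) (frag_of W0)"
      using 3 assms by (simp add: bd_cell_def m bcell_def fgen_def frag_extend_add frag_extend_diff)
    also have "\<dots> = 0"
      by (rule poly_mapping_eqI) (simp add: lookup_add lookup_minus algebra_simps)
    finally show ?thesis .
  next
    case 4
    then show ?thesis using keys_bd[of s] by (intro FF_long) auto
  qed
qed



definition Ap :: "nat list \<Rightarrow> (nat list \<Rightarrow>\<^sub>0 int) \<Rightarrow> nat list \<Rightarrow>\<^sub>0 int" where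
  "Ap ys c = frag_extend (\<lambda>s. frag_of (s @ ys)) c"

definition front :: "nat list \<Rightarrow> nat list \<Rightarrow>\<^sub>0 int" where
  "front u = (if u = [] then 0 else bcell (tl u) + (\<Sum>i\<in>{1..<length u}. frag_cmul ((-1)^i) (bcell (bmerge i u))))"

lemma bd_front: "u \<noteq> [] \<Longrightarrow> bd_cell u = front u + frag_cmul ((-1)^length u) (bcell (butlast u))"
  by (simp add: bd_cell_def front_def)

lemma Ap_bcell: "0 < a \<Longrightarrow> Ap [a] (bcell xs) = bcell (xs @ [a])"
  by (auto simp: Ap_def bcell_def)

lemma Ap_of [simp]: "Ap ys (frag_of s) = frag_of (s @ ys)"
  by (simp add: Ap_def)

lemma Ap_add: "Ap ys (a + b) = Ap ys a + Ap ys b"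
  by (simp add: Ap_def frag_extend_add)

lemma Ap_diff: "Ap ys (a - b) = Ap ys a - Ap ys b"
  by (simp add: Ap_def frag_extend_diff)

lemma Ap_cmul: "Ap ys (frag_cmul k a) = frag_cmul k (Ap ys a)"
  by (simp add: Ap_def frag_extend_cmul)

lemma Ap_sum: "finite I \<Longrightarrow> Ap ys (\<Sum>i\<in>I. g i) = (\<Sum>i\<in>I. Ap ys (g i))"
  by (simp add: Ap_def frag_extend_sum o_def)

lemma Ap_Ap: "Ap [b] (Ap [a] c) = Ap [a,b] c"
  by (simp add: Ap_def fe_comp)

lemma bmerge_snoc: "1 \<le> i \<Longrightarrow> i < length u \<Longrightarrow> bmerge i (u @ [a]) = bmerge i u @ [a]"
  by (auto simp: bmerge_def nth_append)

lemma bmerge_last: "u \<noteq> [] \<Longrightarrow> bmerge (length u) (u @ [a]) = butlast u @ [last u + a]"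
  by (auto simp: bmerge_def nth_append butlast_conv_take last_conv_nth)

lemma front_snoc:
  assumes u: "u \<noteq> []" "\<forall>i\<in>set u. 0 < i" and a: "0 < a"
  shows "front (u @ [a]) = Ap [a] (front u) + frag_cmul ((-1)^length u) (frag_of (butlast u @ [last u + a]))"
proof -
  have pb: "\<forall>i\<in>set (butlast u @ [last u + a]). 0 < i"
    using u a by (auto dest: in_set_butlastD)
  have "front (u @ [a]) = bcell (tl u @ [a]) + (\<Sum>i\<in>{1..<Suc (length u)}. frag_cmul ((-1)^i) (bcell (bmerge i (u @ [a]))))"
    using u by (simp add: front_def)
  also have "(\<Sum>i\<in>{1..<Suc (length u)}. frag_cmul ((-1)^i) (bcell (bmerge i (u @ [a]))))
     = (\<Sum>i\<in>{1..<length u}. frag_cmul ((-1)^i) (bcell (bmerge i u @ [a])))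
       + frag_cmul ((-1)^length u) (frag_of (butlast u @ [last u + a]))"
    using u pb by (simp add: sum.atLeastLessThan_Suc bmerge_snoc bmerge_last bcell_pos Suc_leI)
  finally have 1: "front (u @ [a]) = bcell (tl u @ [a]) + (\<Sum>i\<in>{1..<length u}. frag_cmul ((-1)^i) (bcell (bmerge i u @ [a])))
       + frag_cmul ((-1)^length u) (frag_of (butlast u @ [last u + a]))"
    by (simp add: add.assoc)
  have 2: "Ap [a] (front u) = bcell (tl u @ [a]) + (\<Sum>i\<in>{1..<length u}. frag_cmul ((-1)^i) (bcell (bmerge i u @ [a])))"
    using u a by (simp add: front_def Ap_add Ap_sum Ap_cmul Ap_bcell)
  show ?thesis using 1 2 by simp
qed

lemma keys_front: "Poly_Mapping.keys (front u) \<subseteq> {w. length w = length u - 1}"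
proof (cases "u = []")
  case True then show ?thesis by (simp add: front_def)
next
  case False
  have e: "front u = bd_cell u - frag_cmul ((-1)^length u) (bcell (butlast u))"
    by (simp add: bd_front[OF False])
  have "Poly_Mapping.keys (front u) \<subseteq> Poly_Mapping.keys (bd_cell u) \<union> Poly_Mapping.keys (frag_cmul ((-1)^length u) (bcell (butlast u)))"
    unfolding e by (rule keys_diff)
  moreover have "Poly_Mapping.keys (frag_cmul ((-1)^length u) (bcell (butlast u))) \<subseteq> {butlast u}"
    using keys_bcell[of "butlast u"] keys_cmul by blast
  ultimately have "Poly_Mapping.keys (front u) \<subseteq> {w. length w = length u - 1} \<union> {butlast u}"
    using keys_bd[of u] by blast
  then show ?thesis by auto
qed

lemma pgen_snoc: "pgen (w @ [x]) = frag_cmul ((-1)^length w) (\<Sum>i\<in>{1..<x}. frag_of (w @ [i,1]))"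
  by (simp add: pgen_def)

lemma PP_Ap:
  assumes "Poly_Mapping.keys c \<subseteq> {w. length w = k}"
  shows "PP (Ap [x] c) = frag_cmul ((-1)^k) (\<Sum>i\<in>{1..<x}. Ap [i,1] c)"
  using assms
proof (induction c rule: frag_induction)
  case zero
  then show ?case by (simp add: Ap_def)
next
  case (one w)
  then show ?case by (simp add: pgen_snoc)
next
  case (diff a b)
  then show ?case by (simp add: Ap_diff frag_extend_diff sum_subtractf frag_cmul_diff2)
qed



lemma bd_v_i1:
  assumes v: "v \<noteq> []" "\<forall>j\<in>set v. 0 < j" and i: "0 < i"
  shows "bd_cell (v @ [i,1]) = Ap [i,1] (front v)
     + frag_cmul ((-1)^length v) (frag_of (butlast v @ [last v + i, 1]))
     + frag_cmul (- ((-1)^length v)) (frag_of (v @ [Suc i]))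
     + frag_cmul ((-1)^length v) (frag_of (v @ [i]))"
proof -
  have pvi: "\<forall>j\<in>set (v @ [i]). 0 < j" using v i by auto
  have 1: "bd_cell ((v@[i])@[1]) = front ((v@[i])@[1]) + frag_cmul ((-1)^length v) (frag_of (v@[i]))"
    using pvi by (simp add: bd_front bcell_pos butlast_append)
  have 2: "front ((v@[i])@[1]) = Ap [1] (front (v@[i])) + frag_cmul (- ((-1)^length v)) (frag_of (v @ [Suc i]))"
    using front_snoc[of "v@[i]" 1] pvi by simp
  have 3: "front (v@[i]) = Ap [i] (front v) + frag_cmul ((-1)^length v) (frag_of (butlast v @ [last v + i]))"
    using front_snoc[OF v i] .
  show ?thesis using 1 2 3 by (simp add: Ap_add Ap_cmul Ap_Ap algebra_simps)
qed

lemma tel1: "1 \<le> x \<Longrightarrow> (\<Sum>i\<in>{1..<x}. frag_of [1] - frag_of [Suc i] + frag_of [i]) = frag_cmul (int x) (frag_of [1::nat]) - frag_of [x]"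
proof (induction x)
  case 0 then show ?case by simp
next
  case (Suc n)
  show ?case
  proof (cases "n = 0")
    case True then show ?thesis by simp
  next
    case False
    then have "1 \<le> n" by simp
    then show ?thesis using Suc
      by (simp add: sum.atLeastLessThan_Suc frag_cmul_distrib algebra_simps)
  qed
qed

lemma tel: "1 \<le> x \<Longrightarrow> (\<Sum>i\<in>{1..<x}. frag_of (v @ [Suc i]) - frag_of (v @ [i])) = frag_of (v @ [x]) - frag_of (v @ [1::nat])"
proof (induction x)
  case 0 then show ?case by simp
next
  case (Suc n)
  show ?case
  proof (cases "n = 0")
    case True then show ?thesis by simp
  next
    case False
    then have "1 \<le> n" by simp
    then show ?thesis using Suc
      by (simp add: sum.atLeastLessThan_Suc algebra_simps)
  qed
qed

lemma spl: "1 \<le> a \<Longrightarrow> 1 \<le> x \<Longrightarrow>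
  (\<Sum>j\<in>{1..<a+x}. E j) = (\<Sum>j\<in>{1..<a}. E j) + E a + (\<Sum>i\<in>{1..<x}. E (a+i)) "
  for E :: "nat \<Rightarrow> 'b::ab_group_add"
proof (induction x)
  case 0 then show ?case by simp
next
  case (Suc n)
  show ?case
  proof (cases "n = 0")
    case True then show ?thesis using Suc by (simp add: sum.atLeastLessThan_Suc)
  next
    case False
    then have "1 \<le> n" by simp
    then show ?thesis using Suc
      by (simp add: sum.atLeastLessThan_Suc algebra_simps)
  qed
qed



lemma homot_snoc:
  assumes v: "v \<noteq> []" "\<forall>j\<in>set v. 0 < j" and x: "0 < x"
  shows "frag_extend bd_cell (pgen (v @ [x])) + PP (bd_cell (v @ [x])) = - frag_of (v @ [x])"
proof -
  define m where "m = length v"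
  define e :: int where "e = (-1)^m"
  define w where "w = butlast v"
  define y where "y = last v"
  have vwy: "v = w @ [y]" using v by (simp add: w_def y_def)
  have y0: "0 < y" using v by (simp add: y_def)
  have m1: "1 \<le> m" using v by (simp add: m_def Suc_leI)
  have lw: "length w = m - 1" by (simp add: w_def m_def)
  have em1: "(-1::int)^(m - 1) = - e"
    using m1 by (simp add: e_def power_eq_if)
  have em1': "(-1::int)^(m - Suc 0) = - e" using em1 by simp
  define SA where "SA = (\<Sum>i\<in>{1..<x}. Ap [i,1] (front v))"
  define SB where "SB = (\<Sum>i\<in>{1..<x}. frag_of (w @ [y + i, 1]))"
  define SC where "SC = (\<Sum>i\<in>{1..<x}. frag_of (v @ [Suc i]))"
  define SD where "SD = (\<Sum>i\<in>{1..<x}. frag_of (v @ [i]))"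
  define E where "E j = frag_of (w @ [j, 1])" for j
  define SE1 where "SE1 = (\<Sum>j\<in>{1..<y+x}. E j)"
  define SE0 where "SE0 = (\<Sum>j\<in>{1..<y}. E j)"
  have L1: "frag_extend bd_cell (pgen (v @ [x])) = frag_cmul e (SA + frag_cmul e SB + frag_cmul (-e) SC + frag_cmul e SD)"
  proof -
    have "frag_extend bd_cell (pgen (v @ [x])) = frag_cmul e (\<Sum>i\<in>{1..<x}. bd_cell (v @ [i,1]))"
      by (simp add: pgen_snoc frag_extend_cmul frag_extend_sum o_def e_def m_def)
    also have "(\<Sum>i\<in>{1..<x}. bd_cell (v @ [i,1])) = (\<Sum>i\<in>{1..<x}. Ap [i,1] (front v)
     + frag_cmul e (frag_of (w @ [y + i, 1]))
     + frag_cmul (- e) (frag_of (v @ [Suc i]))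
     + frag_cmul e (frag_of (v @ [i])))"
    proof (rule sum.cong)
      fix i assume "i \<in> {1..<x}"
      then have "0 < i" by simp
      from bd_v_i1[OF v this] show "bd_cell (v @ [i,1]) = Ap [i,1] (front v)
     + frag_cmul e (frag_of (w @ [y + i, 1]))
     + frag_cmul (- e) (frag_of (v @ [Suc i]))
     + frag_cmul e (frag_of (v @ [i]))" by (simp add: e_def m_def w_def y_def)
    qed simp
    also have "\<dots> = SA + frag_cmul e SB + frag_cmul (-e) SC + frag_cmul e SD"
      by (simp add: sum.distrib frag_cmul_sum SA_def SB_def SC_def SD_def)
    finally show ?thesis .
  qed
  have L2: "PP (bd_cell (v @ [x])) = frag_cmul (-e) SA + frag_cmul e (frag_cmul (-e) SE1) + frag_cmul (-e) (frag_cmul (-e) SE0)"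
  proof -
    have pvx: "\<forall>j\<in>set (v @ [x]). 0 < j" using v x by auto
    have "bd_cell (v @ [x]) = Ap [x] (front v) + frag_cmul e (frag_of (w @ [y + x])) + frag_cmul (-e) (frag_of v)"
      using front_snoc[OF v x] v by (simp add: bd_front bcell_pos e_def m_def w_def y_def)
    then have "PP (bd_cell (v @ [x])) = PP (Ap [x] (front v)) + frag_cmul e (pgen (w @ [y + x])) + frag_cmul (-e) (pgen (w @ [y]))"
      using vwy by (simp add: frag_extend_add frag_extend_cmul)
    also have "PP (Ap [x] (front v)) = frag_cmul (-e) SA"
      using PP_Ap[OF keys_front[of v], of x] em1 by (simp add: SA_def m_def)
    also have "pgen (w @ [y + x]) = frag_cmul (-e) SE1"
      by (simp add: pgen_snoc lw em1 em1' SE1_def E_def)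
    also have "pgen (w @ [y]) = frag_cmul (-e) SE0"
      by (simp add: pgen_snoc lw em1 em1' SE0_def E_def)
    finally show ?thesis .
  qed
  have T: "SC = SD + frag_of (v @ [x]) - frag_of (v @ [1])"
    using tel[of x v] x by (simp add: SC_def SD_def sum_subtractf algebra_simps)
  have S: "SE1 = SE0 + frag_of (v @ [1]) + SB"
    using spl[of y x E] y0 x vwy by (simp add: SE1_def SE0_def SB_def E_def)
  have ee: "e = 1 \<or> e = -1" by (simp add: e_def minus_one_power_iff)
  from ee show ?thesis
  proof
    assume "e = 1" then show ?thesis by (simp add: L1 L2 T S algebra_simps)
  next
    assume "e = -1" then show ?thesis by (simp add: L1 L2 T S algebra_simps)
  qed
qed



lemma bd_i1: "0 < i \<Longrightarrow> bd_cell [i, Suc 0] = frag_of [Suc 0] - frag_of [Suc i] + frag_of [i]"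
  by (simp add: bd_cell_def bcell_def bmerge_def)

lemma homot_gen:
  assumes p: "\<forall>j\<in>set s. 0 < j"
  shows "frag_extend bd_cell (pgen s) + PP (bd_cell s) = GG (fgen s) - frag_of s"
proof (cases s rule: rev_cases)
  case Nil
  then show ?thesis by (simp add: pgen_def bd_cell_def fgen_def)
next
  case (snoc v x)
  have x: "0 < x" using p snoc by simp
  show ?thesis
  proof (cases "v = []")
    case True
    have "frag_extend bd_cell (pgen s) = (\<Sum>i\<in>{1..<x}. bd_cell [i, Suc 0])"
      using snoc True by (simp add: pgen_def frag_extend_sum o_def)
    also have "\<dots> = (\<Sum>i\<in>{1..<x}. frag_of [1] - frag_of [Suc i] + frag_of [i])"
      by (rule sum.cong) (simp_all add: bd_i1)
    also have "\<dots> = frag_cmul (int x) (frag_of [1::nat]) - frag_of [x]"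
      using tel1 x by simp
    finally show ?thesis using snoc True
      by (simp add: bd_cell_def fgen_def bcell_def frag_extend_cmul)
  next
    case False
    have pv: "\<forall>j\<in>set v. 0 < j" using p snoc by simp
    have "fgen s = 0" using snoc False by (simp add: fgen_def)
    then show ?thesis using homot_snoc[OF False pv x] snoc by simp
  qed
qed

subsection \<open>f\<close>

lemma fgen_keys: "s \<in> bcells x \<Longrightarrow> Poly_Mapping.keys (fgen s) \<subseteq> rcells x"
proof (cases s rule: list_cases3)
  case 1 then show ?thesis by (simp add: fgen_def rcells_def keys_frag_of)
next
  case (2 a)
  moreover assume "s \<in> bcells x"
  ultimately have "1 \<le> x" by (simp add: bcells_def)
  then show ?thesis using 2 keys_cmul[of "int a" "frag_of W0"] by (auto simp: fgen_def rcells_def keys_frag_of)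
next
  case (3 a b) then show ?thesis by (auto simp: fgen_def)
next
  case 4 then show ?thesis by (auto simp: fgen_def)
qed

lemma F_carr: "Poly_Mapping.keys a \<subseteq> bcells x \<Longrightarrow> Poly_Mapping.keys (FF a) \<subseteq> rcells x"
  using keys_frag_extend[of fgen a] fgen_keys by blast

lemma fgen_homog: "Poly_Mapping.keys (fgen s) \<subseteq> {k. rdeg k = length s}"
proof (cases s rule: list_cases3)
  case 1 then show ?thesis by (simp add: fgen_def keys_frag_of)
next
  case (2 a)
  then show ?thesis using keys_cmul[of "int a" "frag_of W0"] by (auto simp: fgen_def keys_frag_of)
next
  case (3 a b) then show ?thesis by (auto simp: fgen_def)
next
  case 4 then show ?thesis by (auto simp: fgen_def)
qed

lemma F_homog: "homog length n a \<Longrightarrow> homog rdeg n (FF a)"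
  unfolding homog_def using keys_frag_extend[of fgen a] fgen_homog by fastforce

lemma bcells_pos: "s \<in> bcells x \<Longrightarrow> \<forall>i\<in>set s. 0 < i"
  by (simp add: bcells_def)

lemma F_diff: assumes "Poly_Mapping.keys a \<subseteq> bcells x" shows "FF (frag_extend bd_cell a) = 0"
  unfolding fe_comp
proof (rule frag_extend_eq_0)
  fix s assume "s \<in> Poly_Mapping.keys a"
  then have "s \<in> bcells x" using assms by blast
  then show "FF (bd_cell s) = 0" by (intro FF_bd bcells_pos)
qed

lemma rmul_V0: "rmul_gen V0 = frag_of"
proof
  fix p show "rmul_gen V0 p = frag_of p" by (cases p) simp_all
qed

lemma rmul_V0': "(\<lambda>p. rmul_gen p V0) = frag_of"
proof
  fix p show "rmul_gen p V0 = frag_of p" by (cases p) simp_all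
qed

lemma fgen_ne: "s \<noteq> [] \<Longrightarrow> fgen s = frag_cmul (if length s = 1 then int (hd s) else 0) (frag_of W0)"
  by (simp add: fgen_def)

lemma F_shuf:
  assumes ps: "\<forall>i\<in>set s. 0 < i" and pt: "\<forall>i\<in>set t. 0 < i"
  shows "FF (shuffle_cells s t) = bmul rmul_gen (fgen s) (fgen t)"
proof (cases "s = []")
  case True
  then show ?thesis using pt
    by (simp add: shuffle_nil bmul_def rmul_V0 fgen_def[of "[]"] frag_expansion[symmetric])
next
  case sne: False
  show ?thesis
  proof (cases "t = []")
    case True
    then show ?thesis using ps
      by (simp add: shuffle_nil' bmul_def rmul_V0' fgen_def[of "[]"] frag_expansion[symmetric])
  next
    case False
    have fin: "finite (shuffles (length s) (length t))"
      by (rule finite_subset[OF _ finite_permutations[of "{..<length s + length t}"]])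
         (auto simp: shuffles_def)
    have len: "2 \<le> length s + length t" using sne False
      by (metis One_nat_def Suc_leI add_mono length_greater_0_conv one_add_one)
    have l: "FF (shuffle_cells s t) = 0"
      unfolding shuffle_cells_def
      using len by (simp add: frag_extend_sum[OF fin] frag_extend_cmul o_def FF_bcell_long)
    have r: "bmul rmul_gen (fgen s) (fgen t) = 0"
      using sne False by (simp add: fgen_ne bmul_def frag_extend_cmul)
    show ?thesis using l r by simp
  qed
qed

lemma F_mult:
  assumes "Poly_Mapping.keys a \<subseteq> bcells z" "Poly_Mapping.keys b \<subseteq> bcells t"
  shows "FF (frag_extend (\<lambda>s. frag_extend (shuffle_cells s) b) a)
       = frag_extend (\<lambda>p. frag_extend (rmul_gen p) (FF b)) (FF a)"
  using bmul_hom[OF assms, of fgen shuffle_cells rmul_gen fgen fgen] F_shuf bcells_pos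
  unfolding bmul_def by blast

lemma F_aug: "Poly_Mapping.lookup (FF a) V0 = Poly_Mapping.lookup a []"
proof -
  have "Poly_Mapping.keys a \<subseteq> UNIV" by simp
  then show ?thesis
  proof (induction a rule: frag_induction)
    case (one s) then show ?case by (auto simp: fgen_def)
  next
    case (diff a b) then show ?case by (simp add: frag_extend_diff lookup_minus)
  qed simp
qed

subsection \<open>g\<close>

lemma ggen_keys: "p \<in> rcells x \<Longrightarrow> Poly_Mapping.keys (ggen p) \<subseteq> bcells x"
  by (cases p) (auto simp: rcells_def bcells_def keys_frag_of split: if_splits)

lemma G_carr: "Poly_Mapping.keys a \<subseteq> rcells x \<Longrightarrow> Poly_Mapping.keys (GG a) \<subseteq> bcells x"
  using keys_frag_extend[of ggen a] ggen_keys by blast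

lemma ggen_homog: "Poly_Mapping.keys (ggen p) \<subseteq> {k. length k = rdeg p}"
  by (cases p) (auto simp: keys_frag_of)

lemma G_homog: "homog rdeg n a \<Longrightarrow> homog length n (GG a)"
  unfolding homog_def using keys_frag_extend[of ggen a] ggen_homog by fastforce

lemma G_diff: "frag_extend bd_cell (GG a) = 0"
proof -
  have "frag_extend bd_cell (ggen p) = 0" for p
    by (cases p) (simp_all add: bd_cell_def bcell_def)
  then show ?thesis unfolding fe_comp by (simp add: fe_zero_fun)
qed

lemma shuffle_11': "shuffle_cells [Suc 0] [Suc 0] = 0"
  using shuffle_11 by simp

lemma G_gen: "GG (rmul_gen p q) = bmul shuffle_cells (ggen p) (ggen q)"
  by (cases p; cases q) (simp_all add: bmul_def shuffle_nil shuffle_nil' shuffle_11')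

lemma G_mult:
  "GG (frag_extend (\<lambda>p. frag_extend (rmul_gen p) b) a)
     = frag_extend (\<lambda>s. frag_extend (shuffle_cells s) (GG b)) (GG a)"
  using bmul_hom[of a UNIV b UNIV ggen rmul_gen shuffle_cells ggen ggen] G_gen
  unfolding bmul_def by blast

lemma G_aug: "Poly_Mapping.lookup (GG a) [] = Poly_Mapping.lookup a V0"
proof -
  have "Poly_Mapping.keys a \<subseteq> UNIV" by simp
  then show ?thesis
  proof (induction a rule: frag_induction)
    case (one s) then show ?case by (cases s) auto
  next
    case (diff a b) then show ?case by (simp add: frag_extend_diff lookup_minus)
  qed simp
qed

lemma FG: "FF (GG r) = r"
proof -
  have "FF (ggen p) = frag_of p" for p by (cases p) (simp_all add: fgen_def)
  then show ?thesis unfolding fe_comp by (simp add: frag_expansion[symmetric])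
qed

subsection \<open>Phi\<close>

lemma keys_pgen: "Poly_Mapping.keys (pgen s) \<subseteq> {butlast s @ [i,1] | i. i \<in> {1..<last s}}"
proof (cases "s = []")
  case True then show ?thesis by (simp add: pgen_def)
next
  case False
  have "Poly_Mapping.keys (pgen s) \<subseteq> Poly_Mapping.keys (\<Sum>i\<in>{1..<last s}. frag_of (butlast s @ [i,1]))"
    using False keys_cmul by (simp add: pgen_def)
  also have "\<dots> \<subseteq> (\<Union>i\<in>{1..<last s}. Poly_Mapping.keys (frag_of (butlast s @ [i,1])))"
    by (rule keys_sum)
  also have "\<dots> \<subseteq> {butlast s @ [i,1] | i. i \<in> {1..<last s}}"
    by (auto simp: keys_frag_of)
  finally show ?thesis .
qed

lemma pgen_keys: "s \<in> bcells x \<Longrightarrow> Poly_Mapping.keys (pgen s) \<subseteq> bcells x"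
proof
  fix u assume s: "s \<in> bcells x" and u: "u \<in> Poly_Mapping.keys (pgen s)"
  then have ne: "s \<noteq> []" by (auto simp: pgen_def)
  from u obtain i where i: "u = butlast s @ [i,1]" "1 \<le> i" "i < last s"
    using keys_pgen by fastforce
  have sl: "sum_list s = sum_list (butlast s) + last s"
    using ne by (metis append_butlast_last_id sum_list_append sum_list_simps add_0_right)
  show "u \<in> bcells x"
    using s i sl by (auto simp: bcells_def dest: in_set_butlastD)
qed

lemma P_carr: "Poly_Mapping.keys a \<subseteq> bcells x \<Longrightarrow> Poly_Mapping.keys (PP a) \<subseteq> bcells x"
  using keys_frag_extend[of pgen a] pgen_keys by blast

lemma P_homog: "homog length n a \<Longrightarrow> homog length (n + 1) (PP a)"
proof -
  assume h: "homog length n a"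
  have "\<And>s u. u \<in> Poly_Mapping.keys (pgen s) \<Longrightarrow> length u = length s + 1"
  proof -
    fix s u assume u: "u \<in> Poly_Mapping.keys (pgen s)"
    then have ne: "s \<noteq> []" by (auto simp: pgen_def)
    from u obtain i where "u = butlast s @ [i,1]" "1 \<le> i" "i < last s" using keys_pgen by fastforce
    then show "length u = length s + 1" using ne by simp
  qed
  then show ?thesis using h keys_frag_extend[of pgen a] unfolding homog_def by fastforce
qed

lemma PG: "PP (GG r) = 0"
proof -
  have "PP (ggen p) = 0" for p by (cases p) (simp_all add: pgen_def)
  then show ?thesis unfolding fe_comp by (simp add: fe_zero_fun)
qed

lemma FP: "FF (PP c) = 0"
proof -
  have "FF (pgen s) = 0" for s
    by (rule FF_long) (use keys_pgen[of s] in auto)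
  then show ?thesis unfolding fe_comp by (simp add: fe_zero_fun)
qed

lemma PPP: "PP (PP c) = 0"
proof -
  have "PP (pgen s) = 0" for s
  proof -
    have "pgen (butlast s @ [i, Suc 0]) = 0" for i
      using pgen_snoc[of "butlast s @ [i]" 1] by simp
    then show ?thesis by (simp add: pgen_def frag_extend_cmul frag_extend_sum o_def)
  qed
  then show ?thesis unfolding fe_comp by (simp add: fe_zero_fun)
qed

lemma P_homot:
  assumes "Poly_Mapping.keys c \<subseteq> bcells x"
  shows "frag_extend bd_cell (PP c) + PP (frag_extend bd_cell c) = GG (FF c) - c"
  using assms
proof (induction c rule: frag_induction)
  case (one s) then show ?case using homot_gen[OF bcells_pos[OF one]] by simp
next
  case (diff a b)
  have "frag_extend bd_cell (PP (a-b)) + PP (frag_extend bd_cell (a-b)) = (frag_extend bd_cell (PP a) + PP (frag_extend bd_cell a)) - (frag_extend bd_cell (PP b) + PP (frag_extend bd_cell b))"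
    by (simp add: frag_extend_diff algebra_simps)
  then show ?case using diff.IH by (simp add: frag_extend_diff)
qed simp



lemma f_mor: "dga_mor Bbar Rdga (\<lambda>x. FF)"
  unfolding dga_mor_def mod_mor_def Bbar_def Rdga_def
  by (auto simp: frag_extend_add F_aug fgen_def[of "[]"] intro: F_carr[THEN subsetD] F_homog F_diff F_mult)

lemma g_mor: "dga_mor Rdga Bbar (\<lambda>x. GG)"
  unfolding dga_mor_def mod_mor_def Bbar_def Rdga_def
  by (auto simp: frag_extend_add G_aug G_diff G_mult intro: G_carr[THEN subsetD] G_homog)

lemma P_homog': "homog length n a \<Longrightarrow> homog length (Suc n) (PP a)"
  using P_homog by simp

lemma p_mor: "mod_mor Bbar Bbar 1 (\<lambda>x. PP)"
  unfolding mod_mor_def Bbar_def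
  by (auto simp: frag_extend_add intro: P_carr[THEN subsetD] P_homog')

theorem theorem7p10:
  shows "\<exists>f g.
     dga_mor Bbar Rdga f \<and>
     f 0 (frag_of []) = frag_of V0 \<and>
     (\<forall>x::nat. 1 \<le> x \<longrightarrow> f x (frag_of [x]) = frag_cmul (int x) (frag_of W0)) \<and>
     dga_mor Rdga Bbar g \<and>
     g 0 (frag_of V0) = frag_of [] \<and>
     g 1 (frag_of W0) = frag_of [1] \<and>
     (\<forall>x. \<forall>r \<in> carr Rdga x. f x (g x r) = r) \<and>
     (\<exists>\<Phi>. mod_mor Bbar Bbar 1 \<Phi> \<and>
        (\<forall>x. \<forall>c \<in> carr Bbar x.
           diff Bbar (\<Phi> x c) + \<Phi> x (diff Bbar c) = g x (f x c) - c) \<and>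
        (\<forall>x. \<forall>r \<in> carr Rdga x. \<Phi> x (g x r) = 0) \<and>
        (\<forall>x. \<forall>c \<in> carr Bbar x. f x (\<Phi> x c) = 0) \<and>
        (\<forall>x. \<forall>c \<in> carr Bbar x. \<Phi> x (\<Phi> x c) = 0))"
proof (intro exI conjI)
  show "dga_mor Bbar Rdga (\<lambda>x. FF)" by (rule f_mor)
  show "dga_mor Rdga Bbar (\<lambda>x. GG)" by (rule g_mor)
  show "mod_mor Bbar Bbar 1 (\<lambda>x. PP)" by (rule p_mor)
  show "FF (frag_of []) = frag_of V0" by (simp add: fgen_def)
  show "\<forall>x::nat. 1 \<le> x \<longrightarrow> FF (frag_of [x]) = frag_cmul (int x) (frag_of W0)" by (simp add: fgen_def)
  show "GG (frag_of V0) = frag_of []" by simp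
  show "GG (frag_of W0) = frag_of [1]" by simp
  show "\<forall>x. \<forall>r \<in> carr Rdga x. FF (GG r) = r" by (simp add: FG)
  show "\<forall>x. \<forall>c \<in> carr Bbar x. diff Bbar (PP c) + PP (diff Bbar c) = GG (FF c) - c"
    by (auto simp: Bbar_def intro: P_homot)
  show "\<forall>x. \<forall>r \<in> carr Rdga x. PP (GG r) = 0" by (simp add: PG)
  show "\<forall>x. \<forall>c \<in> carr Bbar x. FF (PP c) = 0" by (simp add: FP)
  show "\<forall>x. \<forall>c \<in> carr Bbar x. PP (PP c) = 0" by (simp add: PPP)
qed

end
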